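(* Let $(V,E)$ be a finite undirected graph, $y=(y_n)_{n\in V}\in\mathbb{S}^V$, and let $(w_n)_{n\in V}$, $(\lambda_{n,n'})_{\{n,n'\}\in E}$ be nonnegative real weights. Consider the nonconvex problem $$\text{(P)}\quad \min_{x\in\mathbb{S}^V}\ \Psi_{\mathrm{orig}}(x)=\sum_{n\in V}w_n(1-x_n\cdot y_n)+\sum_{\{n,n'\}\in E}\lambda_{n,n'}(1-x_n\cdot x_{n'})$$ and the convex problem $$\text{(R)}\quad \min\ \Psi_{\mathrm{conv}}(x,d,e,f,g)=\sum_{n\in V}w_n(1-x_n\cdot y_n)+\sum_{\{n,n'\}\in E}\lambda_{n,n'}(1-d_{n,n'})$$ over $x_n\in\mathbb{R}^3$ ($n\in V$) and $(d_{n,n'},e_{n,n'},f_{n,n'},g_{n,n'})\in\mathbb{R}^4$ ($\{n,n'\}\in E$), subject to $P_{n,n'}\succcurlyeq 0$ for all $\{n,n'\}\in E$. Then: (i) for every $x\in\mathbb{S}^V$ there exist $d,e,f,g$ such that $(x,d,e,f,g)$ is feasible for (R) and $\Psi_{\mathrm{conv}}(x,d,e,f,g)=\Psi_{\mathrm{orig}}(x)$; hence the optimal value of (R) is at most that of (P). (ii) If $(x^\star,d^\star,e^\star,f^\star,g^\star)$ is a minimizer of (R) such that $x^\star_n\in\mathbb{S}$ for every $n\in V$ and $d^\star_{n,n'}=x^\star_n\cdot x^\star_{n'}$ for every $\{n,n'\}\in E$, then $x^\star$ is a global minimizer of (P).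
   Context: $\mathbb{S}=\{x\in\mathbb{R}^3:\|x\|_2=1\}$, $x\cdot x'$ is the Euclidean inner product, $i=\sqrt{-1}$, and $\succcurlyeq 0$ means Hermitian positive semidefinite. Edges of $(V,E)$ are 2-element subsets $\{n,n'\}$ of $V$; for each edge a fixed ordering $(n,n')$ of its endpoints is chosen. For real $a,b,c,a',b',c',d,e,f,g$, define the $6\times 6$ Hermitian matrix $$P(a,b,c,a',b',c',d,e,f,g)=\begin{pmatrix} 1&0&-ci&-b-ai&-c'i&-b'-a'i\\ 0&1&b-ai&ci&b'-a'i&c'i\\ ci&b+ai&1&0&d-gi&-f-ei\\ -b+ai&-ci&0&1&f-ei&d+gi\\ c'i&b'+a'i&d+gi&f+ei&1&0\\ -b'+a'i&-c'i&-f+ei&d-gi&0&1 \end{pmatrix}.$$ For an edge $\{n,n'\}$ with $x_n=(x_n^1,x_n^2,x_n^3)$, $P_{n,n'}:=P(x_n^1,x_n^2,x_n^3,x_{n'}^1,x_{n'}^2,x_{n'}^3,d_{n,n'},e_{n,n'},f_{n,n'},g_{n,n'})$. *)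

theory Defs
  imports "HOL-Analysis.Analysis"
begin

definition sph :: "(real^3) set" where
  "sph = {x. norm x = 1}"

definition Pmat :: "real \<Rightarrow> real \<Rightarrow> real \<Rightarrow> real \<Rightarrow> real \<Rightarrow> real \<Rightarrow> real \<Rightarrow> real \<Rightarrow> real \<Rightarrow> real
    \<Rightarrow> nat \<Rightarrow> nat \<Rightarrow> complex" where
  "Pmat a b c a' b' c' d e f g = (\<lambda>i j.
     [[1, 0, Complex 0 (-c), Complex (-b) (-a), Complex 0 (-c'), Complex (-b') (-a')],
      [0, 1, Complex b (-a), Complex 0 c, Complex b' (-a'), Complex 0 c'],
      [Complex 0 c, Complex b a, 1, 0, Complex d (-g), Complex (-f) (-e)],
      [Complex (-b) a, Complex 0 (-c), 0, 1, Complex f (-e), Complex d g],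
      [Complex 0 c', Complex b' a', Complex d g, Complex f e, 1, 0],
      [Complex (-b') a', Complex 0 (-c'), Complex (-f) e, Complex d (-g), 0, 1]] ! i ! j)"

definition psd :: "nat \<Rightarrow> (nat \<Rightarrow> nat \<Rightarrow> complex) \<Rightarrow> bool" where
  "psd n M \<longleftrightarrow> (\<forall>i<n. \<forall>j<n. M i j = cnj (M j i)) \<and>
     (\<forall>v :: nat \<Rightarrow> complex. 0 \<le> Re (\<Sum>i<n. \<Sum>j<n. cnj (v i) * M i j * v j))"

text \<open>Edge matrix P_{n,n'} for the edge with chosen ordering (n,n') = ori ed.\<close>
definition Pedge :: "('v \<Rightarrow> real^3) \<Rightarrow> ('v set \<Rightarrow> 'v \<times> 'v) \<Rightarrow>
    ('v set \<Rightarrow> real) \<Rightarrow> ('v set \<Rightarrow> real) \<Rightarrow> ('v set \<Rightarrow> real) \<Rightarrow> ('v set \<Rightarrow> real) \<Rightarrow> 'v set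
    \<Rightarrow> nat \<Rightarrow> nat \<Rightarrow> complex" where
  "Pedge x ori d e f g ed =
     (let n = fst (ori ed); n' = snd (ori ed) in
      Pmat (x n $ 1) (x n $ 2) (x n $ 3) (x n' $ 1) (x n' $ 2) (x n' $ 3)
           (d ed) (e ed) (f ed) (g ed))"

definition feasibleR :: "'v set set \<Rightarrow> ('v set \<Rightarrow> 'v \<times> 'v) \<Rightarrow> ('v \<Rightarrow> real^3) \<Rightarrow>
    ('v set \<Rightarrow> real) \<Rightarrow> ('v set \<Rightarrow> real) \<Rightarrow> ('v set \<Rightarrow> real) \<Rightarrow> ('v set \<Rightarrow> real) \<Rightarrow> bool" where
  "feasibleR E ori x d e f g \<longleftrightarrow> (\<forall>ed\<in>E. psd 6 (Pedge x ori d e f g ed))"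

definition Psi_orig :: "'v set \<Rightarrow> 'v set set \<Rightarrow> ('v set \<Rightarrow> 'v \<times> 'v) \<Rightarrow> ('v \<Rightarrow> real) \<Rightarrow>
    ('v set \<Rightarrow> real) \<Rightarrow> ('v \<Rightarrow> real^3) \<Rightarrow> ('v \<Rightarrow> real^3) \<Rightarrow> real" where
  "Psi_orig V E ori w lam y x =
     (\<Sum>n\<in>V. w n * (1 - x n \<bullet> y n)) +
     (\<Sum>ed\<in>E. lam ed * (1 - x (fst (ori ed)) \<bullet> x (snd (ori ed))))"

definition Psi_conv :: "'v set \<Rightarrow> 'v set set \<Rightarrow> ('v \<Rightarrow> real) \<Rightarrow>
    ('v set \<Rightarrow> real) \<Rightarrow> ('v \<Rightarrow> real^3) \<Rightarrow> ('v \<Rightarrow> real^3) \<Rightarrow> ('v set \<Rightarrow> real) \<Rightarrow> real" where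
  "Psi_conv V E w lam y x d =
     (\<Sum>n\<in>V. w n * (1 - x n \<bullet> y n)) + (\<Sum>ed\<in>E. lam ed * (1 - d ed))"

end

theory Submission imports Defs begin

lemma sum6: "(\<Sum>i<6::nat. F i) = F 0 + F 1 + F 2 + F 3 + F 4 + F 5"
  by (simp add: numeral_eq_Suc lessThan_Suc add_ac)

lemma key_psd:
  fixes a b c a' b' c' :: real
  assumes u: "a^2+b^2+c^2 = 1" and v: "a'^2+b'^2+c'^2 = 1"
  shows "psd 6 (Pmat a b c a' b' c' (a*a'+b*b'+c*c') (c*b'-b*c') (a*c'-c*a') (a'*b-a*b'))"
  unfolding psd_def
proof (rule conjI)
  show "\<forall>i<6. \<forall>j<6. Pmat a b c a' b' c' (a*a'+b*b'+c*c') (c*b'-b*c') (a*c'-c*a') (a'*b-a*b') i j =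
     cnj (Pmat a b c a' b' c' (a*a'+b*b'+c*c') (c*b'-b*c') (a*c'-c*a') (a'*b-a*b') j i)"
    by (simp add: Pmat_def numeral_eq_Suc less_Suc_eq complex_eq_iff algebra_simps)
next
  show "\<forall>v. 0 \<le> Re (\<Sum>i<6. \<Sum>j<6. cnj (v i) * Pmat a b c a' b' c' (a*a'+b*b'+c*c') (c*b'-b*c') (a*c'-c*a') (a'*b-a*b') i j * v j)"
  proof
  fix v :: "nat \<Rightarrow> complex"
  define p where "p j = Re (v j)" for j
  define q where "q j = Im (v j)" for j
  have vv: "v j = Complex (p j) (q j)" for j by (simp add: p_def q_def)
  define w0 where "w0 = v 0 + Complex 0 (-c) * v 2 + Complex (-b) (-a) * v 3 + Complex 0 (-c') * v 4 + Complex (-b') (-a') * v 5"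
  define w1 where "w1 = v 1 + Complex b (-a) * v 2 + Complex 0 c * v 3 + Complex b' (-a') * v 4 + Complex 0 c' * v 5"
  have "Re (\<Sum>i<6. \<Sum>j<6. cnj (v i) * Pmat a b c a' b' c' (a*a'+b*b'+c*c') (c*b'-b*c') (a*c'-c*a') (a'*b-a*b') i j * v j)
     = (Re w0)^2 + (Im w0)^2 + (Re w1)^2 + (Im w1)^2
       + (1 - (a^2+b^2+c^2)) * ((p 2)^2 + (q 2)^2 + (p 3)^2 + (q 3)^2)
       + (1 - (a'^2+b'^2+c'^2)) * ((p 4)^2 + (q 4)^2 + (p 5)^2 + (q 5)^2)"
    unfolding sum6 Pmat_def w0_def w1_def vv
    by (simp add: algebra_simps power2_eq_square)
  also have "\<dots> \<ge> 0" using u v by simp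
  finally show "0 \<le> Re (\<Sum>i<6. \<Sum>j<6. cnj (v i) * Pmat a b c a' b' c' (a*a'+b*b'+c*c') (c*b'-b*c') (a*c'-c*a') (a'*b-a*b') i j * v j)" .
  qed
qed

lemma sph_sq: "x \<in> sph \<Longrightarrow> (x$1)^2 + (x$2)^2 + (x$3)^2 = (1::real)"
  unfolding sph_def by (simp add: norm_eq_sqrt_inner inner_vec_def sum_3 power2_eq_square)

lemma inner3: "(x::real^3) \<bullet> y = x$1*y$1 + x$2*y$2 + x$3*y$3"
  by (simp add: inner_vec_def sum_3)

lemma part1:
  assumes edges: "\<forall>ed\<in>E. ed \<subseteq> V \<and> card ed = 2"
    and ori: "\<forall>ed\<in>E. ed = {fst (ori ed), snd (ori ed)}"
    and xs: "\<forall>n\<in>V. x n \<in> sph"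
  shows "\<exists>d e f g. feasibleR E ori x d e f g \<and>
                   Psi_conv V E w lam y x d = Psi_orig V E ori w lam y x"
proof -
  define d where "d ed = x (fst (ori ed)) \<bullet> x (snd (ori ed))" for ed
  define e where "e ed = x (fst (ori ed))$3 * x (snd (ori ed))$2 - x (fst (ori ed))$2 * x (snd (ori ed))$3" for ed
  define f where "f ed = x (fst (ori ed))$1 * x (snd (ori ed))$3 - x (fst (ori ed))$3 * x (snd (ori ed))$1" for ed
  define g where "g ed = x (snd (ori ed))$1 * x (fst (ori ed))$2 - x (fst (ori ed))$1 * x (snd (ori ed))$2" for ed
  have "feasibleR E ori x d e f g"
    unfolding feasibleR_def
  proof
    fix ed assume ed: "ed \<in> E"
    have "fst (ori ed) \<in> V" "snd (ori ed) \<in> V" using ed edges ori by blast+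
    then have u1: "x (fst (ori ed)) \<in> sph" and u2: "x (snd (ori ed)) \<in> sph" using xs by auto
    show "psd 6 (Pedge x ori d e f g ed)"
      unfolding Pedge_def Let_def d_def e_def f_def g_def inner3
      by (rule key_psd[OF sph_sq[OF u1] sph_sq[OF u2]])
  qed
  moreover have "Psi_conv V E w lam y x d = Psi_orig V E ori w lam y x"
    unfolding Psi_conv_def Psi_orig_def d_def by simp
  ultimately show ?thesis by blast
qed

theorem mainTheorem4:
  fixes V :: "'v set" and E :: "'v set set" and ori :: "'v set \<Rightarrow> 'v \<times> 'v"
    and y :: "'v \<Rightarrow> real^3" and w :: "'v \<Rightarrow> real" and lam :: "'v set \<Rightarrow> real"
  assumes finV: "finite V"
    and edges: "\<forall>ed\<in>E. ed \<subseteq> V \<and> card ed = 2"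
    and ori: "\<forall>ed\<in>E. ed = {fst (ori ed), snd (ori ed)}"
    and y_sph: "\<forall>n\<in>V. y n \<in> sph"
    and w_nonneg: "\<forall>n\<in>V. 0 \<le> w n"
    and lam_nonneg: "\<forall>ed\<in>E. 0 \<le> lam ed"
  shows
    "(\<forall>x. (\<forall>n\<in>V. x n \<in> sph) \<longrightarrow>
        (\<exists>d e f g. feasibleR E ori x d e f g \<and>
                   Psi_conv V E w lam y x d = Psi_orig V E ori w lam y x))
     \<and>
     (\<forall>xs ds es fs gs.
        (feasibleR E ori xs ds es fs gs \<and>
         (\<forall>x d e f g. feasibleR E ori x d e f g \<longrightarrow>
              Psi_conv V E w lam y xs ds \<le> Psi_conv V E w lam y x d) \<and>
         (\<forall>n\<in>V. xs n \<in> sph) \<and>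
         (\<forall>ed\<in>E. ds ed = xs (fst (ori ed)) \<bullet> xs (snd (ori ed))))
        \<longrightarrow>
        ((\<forall>n\<in>V. xs n \<in> sph) \<and>
         (\<forall>x. (\<forall>n\<in>V. x n \<in> sph) \<longrightarrow>
              Psi_orig V E ori w lam y xs \<le> Psi_orig V E ori w lam y x)))"
proof (rule conjI)
  show P1: "\<forall>x. (\<forall>n\<in>V. x n \<in> sph) \<longrightarrow>
        (\<exists>d e f g. feasibleR E ori x d e f g \<and>
                   Psi_conv V E w lam y x d = Psi_orig V E ori w lam y x)"
    using part1[OF edges ori] by blast
  show "\<forall>xs ds es fs gs.
        (feasibleR E ori xs ds es fs gs \<and>
         (\<forall>x d e f g. feasibleR E ori x d e f g \<longrightarrow>
              Psi_conv V E w lam y xs ds \<le> Psi_conv V E w lam y x d) \<and>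
         (\<forall>n\<in>V. xs n \<in> sph) \<and>
         (\<forall>ed\<in>E. ds ed = xs (fst (ori ed)) \<bullet> xs (snd (ori ed))))
        \<longrightarrow>
        ((\<forall>n\<in>V. xs n \<in> sph) \<and>
         (\<forall>x. (\<forall>n\<in>V. x n \<in> sph) \<longrightarrow>
              Psi_orig V E ori w lam y xs \<le> Psi_orig V E ori w lam y x))"
  proof (intro allI impI conjI)
    fix xs ds es fs gs x
    assume H: "feasibleR E ori xs ds es fs gs \<and>
         (\<forall>x d e f g. feasibleR E ori x d e f g \<longrightarrow>
              Psi_conv V E w lam y xs ds \<le> Psi_conv V E w lam y x d) \<and>
         (\<forall>n\<in>V. xs n \<in> sph) \<and>
         (\<forall>ed\<in>E. ds ed = xs (fst (ori ed)) \<bullet> xs (snd (ori ed)))"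
    then show "\<forall>n\<in>V. xs n \<in> sph" by blast
    assume xS: "\<forall>n\<in>V. x n \<in> sph"
    obtain d e f g where fe: "feasibleR E ori x d e f g"
      and eq: "Psi_conv V E w lam y x d = Psi_orig V E ori w lam y x"
      using part1[OF edges ori xS] by blast
    have "Psi_orig V E ori w lam y xs = Psi_conv V E w lam y xs ds"
      using H unfolding Psi_conv_def Psi_orig_def by simp
    also have "\<dots> \<le> Psi_conv V E w lam y x d" using H fe by blast
    finally show "Psi_orig V E ori w lam y xs \<le> Psi_orig V E ori w lam y x" using eq by simp
  qed
qed

end
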